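(* Let $X\subseteq U$ be a fixed set of $|X|=m$ keys, and let $S\subseteq[2^r]$ with $|S|/2^r=\rho$. Let $h:U\to[2^r]$ be a simple tabulation hash function, and define $p_0'=1-(1-\rho)^m$. If $p$ denotes the probability that $h(X)\cap S\neq\emptyset$, then $$|p-p_0'|\le m^{2-1/c}\rho^2.$$ Moreover, if $q\in U\setminus X$ is a distinguished query key and $S$ (and hence $\rho$) is allowed to depend on $h(q)$, i.e. for every $z\in[2^r]$, conditioned on $h(q)=z$ the set $S$ is a fixed function of $z$ and $p$ denotes the conditional probability that $h(X)\cap S\ne\emptyset$, then $|p-p_0'|\le 2m^{2-1/c}\rho^2$.
   Context: Simple tabulation hashing: the key universe is $U=[u]$, each key $x\in U$ is viewed as a vector $(x[0],\dots,x[c-1])$ of $c=O(1)$ characters from $\Sigma=[u^{1/c}]$; the range is $[2^r]$, viewed as $r$-bit strings. $h(x)=h_0(x[0])\oplus\cdots\oplus h_{c-1}(x[c-1])$ with $h_0,\dots,h_{c-1}:\Sigma\to[2^r]$ independent fully random functions and $\oplus$ bitwise XOR. *)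

theory Defs
  imports "HOL-Probability.Probability"
begin

text \<open>Keys of U = [sigma^c] are represented as
  character vectors (lists of length c over the alphabet [sigma]); hash values
  lie in [2^r], viewed as r-bit strings, combined by bitwise XOR on nat.\<close>

definition keys :: "nat \<Rightarrow> nat \<Rightarrow> nat list set" where
  "keys c \<sigma> = {x. length x = c \<and> set x \<subseteq> {..<\<sigma>}}"

text \<open>A table assignment T (i, a) = h_i(a) for character position i < c and
  character a < sigma; all such assignments (fully random, independent).\<close>
definition tables :: "nat \<Rightarrow> nat \<Rightarrow> nat \<Rightarrow> (nat \<times> nat \<Rightarrow> nat) set" where
  "tables c \<sigma> r = PiE ({..<c} \<times> {..<\<sigma>}) (\<lambda>_. {..<2^r})"

definition tab_hash :: "nat \<Rightarrow> (nat \<times> nat \<Rightarrow> nat) \<Rightarrow> nat list \<Rightarrow> nat" where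
  "tab_hash c T x = foldr (\<lambda>i acc. xor (T (i, x ! i)) acc) [0..<c] 0"

text \<open>Uniform distribution on the tables = independent fully random h_0..h_{c-1}.\<close>
definition tab_dist :: "nat \<Rightarrow> nat \<Rightarrow> nat \<Rightarrow> (nat \<times> nat \<Rightarrow> nat) pmf" where
  "tab_dist c \<sigma> r = pmf_of_set (tables c \<sigma> r)"

end

theory Submission
  imports Defs
begin


lemma xor_lt_nat:
  assumes "(a::nat) < 2^r" "b < 2^r" shows "xor a b < 2^r"
proof -
  have "take_bit r (xor a b) = xor (take_bit r a) (take_bit r b)" by (simp add: take_bit_xor)
  also have "\<dots> = xor a b" using assms by (simp add: take_bit_nat_eq_self)
  finally show ?thesis by (metis take_bit_nat_less_exp)
qed

lemma xor_cancel_left: "xor a (xor a b) = (b::nat)"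
  by (simp add: xor.assoc[symmetric])

lemma foldr_xor_cong:
  "(\<forall>i\<in>set L. T (i, x!i) = T' (i, x!i)) \<Longrightarrow>
   foldr (\<lambda>i acc. xor (T (i, x!i)) acc) L a = foldr (\<lambda>i acc. xor (T' (i, x!i)) acc) L a"
  by (induction L) auto

lemma tab_hash_cong:
  "(\<forall>i<c. T (i, x!i) = T' (i, x!i)) \<Longrightarrow> tab_hash c T x = tab_hash c T' x"
  unfolding tab_hash_def by (rule foldr_xor_cong) auto

lemma foldr_xor_upd:
  fixes T :: "nat \<times> nat \<Rightarrow> nat"
  assumes "distinct L" "k \<in> set L"
  shows "foldr (\<lambda>i acc. xor ((T((k, x!k) := t)) (i, x!i)) acc) L a
       = xor (xor t (T (k, x!k))) (foldr (\<lambda>i acc. xor (T (i, x!i)) acc) L a)"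
  using assms
proof (induction L)
  case Nil then show ?case by simp
next
  case (Cons i L)
  show ?case
  proof (cases "i = k")
    case True
    then have "k \<notin> set L" using Cons by auto
    then have "foldr (\<lambda>i acc. xor ((T((k, x!k) := t)) (i, x!i)) acc) L a
       = foldr (\<lambda>i acc. xor (T (i, x!i)) acc) L a"
      by (intro foldr_xor_cong) auto
    then show ?thesis using True by (simp add: xor.assoc xor_cancel_left)
  next
    case False
    then have "k \<in> set L" "distinct L" using Cons by auto
    then show ?thesis using Cons.IH False by (simp add: xor.left_commute)
  qed
qed

lemma tab_hash_upd:
  "k < c \<Longrightarrow> tab_hash c (T((k, x!k) := t)) x = xor (xor t (T (k, x!k))) (tab_hash c T x)"
  unfolding tab_hash_def by (rule foldr_xor_upd) auto

lemma foldr_xor_lt: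
  assumes "\<forall>i\<in>set L. T (i, x!i) < (2::nat)^r"
  shows "foldr (\<lambda>i acc. xor (T (i, x!i)) acc) L 0 < 2^r"
  using assms by (induction L) (auto intro!: xor_lt_nat)

lemma tab_hash_lt:
  assumes "T \<in> tables c \<sigma> r" "x \<in> keys c \<sigma>"
  shows "tab_hash c T x < 2^r"
  unfolding tab_hash_def
proof (rule foldr_xor_lt, intro ballI)
  fix i assume "i \<in> set [0..<c]"
  then have "(i, x!i) \<in> {..<c} \<times> {..<\<sigma>}" using assms(2) unfolding keys_def by (auto intro: nth_mem)
  then show "T (i, x!i) < 2^r" using assms(1) unfolding tables_def by (auto dest: PiE_mem)
qed

lemma tables_upd:
  assumes "T \<in> tables c \<sigma> r" "e \<in> {..<c} \<times> {..<\<sigma>}" "t < 2^r"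
  shows "T(e := t) \<in> tables c \<sigma> r"
proof -
  have "T(e := t) \<in> PiE (insert e ({..<c} \<times> {..<\<sigma>})) (\<lambda>_. {..<(2::nat)^r})"
    using assms unfolding tables_def by (intro PiE_fun_upd) auto
  then show ?thesis using assms(2) unfolding tables_def by (simp add: insert_absorb)
qed

lemma finite_tables: "finite (tables c \<sigma> r)"
  unfolding tables_def by (intro finite_PiE) auto

lemma tables_ne: "tables c \<sigma> r \<noteq> {}"
  proof -
  have "(0::nat) \<in> {..<2^r}" by simp
  then show ?thesis unfolding tables_def by (auto simp: PiE_eq_empty_iff lessThan_empty_iff)
qed

lemma count_fiber:
  assumes A: "A \<subseteq> tables c \<sigma> r" "finite A" and e: "e \<in> {..<c} \<times> {..<\<sigma>}"
    and cl: "\<forall>T\<in>A. \<forall>t<2^r. T(e:=t) \<in> A"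
  shows "card {T\<in>A. P T} = (\<Sum>T0\<in>(\<lambda>T. T(e:=0)) ` A. card {t\<in>{..<(2::nat)^r}. P (T0(e:=t))})"
proof -
  let ?A0 = "(\<lambda>T. T(e:=0)) ` A"
  let ?Sg = "Sigma ?A0 (\<lambda>T0. {t\<in>{..<(2::nat)^r}. P (T0(e:=t))})"
  have bij: "bij_betw (\<lambda>(T0,t). T0(e:=t)) ?Sg {T\<in>A. P T}"
  proof (rule bij_betwI')
    fix p1 p2 assume p1: "p1 \<in> ?Sg" and p2: "p2 \<in> ?Sg"
    obtain T0 t where [simp]: "p1 = (T0, t)" by (cases p1)
    obtain T0' t' where [simp]: "p2 = (T0', t')" by (cases p2)
    have z: "T0 e = 0" "T0' e = 0" using p1 p2 by auto
    show "((case p1 of (T0, t) \<Rightarrow> T0(e := t)) = (case p2 of (T0, t) \<Rightarrow> T0(e := t))) = (p1 = p2)"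
    proof
      assume eq: "(case p1 of (T0, t) \<Rightarrow> T0(e := t)) = (case p2 of (T0, t) \<Rightarrow> T0(e := t))"
      then have eq': "T0(e := t) = T0'(e := t')" by simp
      have "t = t'" using fun_cong[OF eq', of e] by simp
      moreover have "T0 = T0'"
      proof
        fix y show "T0 y = T0' y" using fun_cong[OF eq', of y] z by (cases "y = e") auto
      qed
      ultimately show "p1 = p2" by simp
    qed simp
  next
    fix p assume p: "p \<in> ?Sg"
    obtain T0 t where [simp]: "p = (T0, t)" by (cases p)
    from p obtain T1 where T1: "T1 \<in> A" "T0 = T1(e:=0)" and t: "t < 2^r" "P (T0(e:=t))" by auto
    have "T0(e:=t) = T1(e:=t)" using T1 by simp
    then have "T0(e:=t) \<in> A" using cl T1 t by auto
    then show "(case p of (T0, t) \<Rightarrow> T0(e := t)) \<in> {T \<in> A. P T}" using t by simp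
  next
    fix T assume T: "T \<in> {T \<in> A. P T}"
    then have "T e < 2^r" using A e unfolding tables_def by (auto dest: PiE_mem)
    moreover have "(T(e:=0))(e := T e) = T" by simp
    ultimately show "\<exists>p\<in>?Sg. T = (case p of (T0, t) \<Rightarrow> T0(e := t))"
      using T by (intro bexI[of _ "(T(e:=0), T e)"]) auto
  qed
  have "card {T\<in>A. P T} = card ?Sg" using bij_betw_same_card[OF bij] by simp
  also have "\<dots> = (\<Sum>T0\<in>?A0. card {t\<in>{..<(2::nat)^r}. P (T0(e:=t))})"
    using A by (intro card_SigmaI) auto
  finally show ?thesis .
qed

lemma card_xor_shift:
  assumes "S \<subseteq> {..<(2::nat)^r}" "w < 2^r"
  shows "card {t\<in>{..<(2::nat)^r}. xor t w \<in> S} = card S"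
proof -
  have "bij_betw (\<lambda>t. xor t w) {t\<in>{..<(2::nat)^r}. xor t w \<in> S} S"
  proof (rule bij_betwI')
    fix t t' :: nat
    show "(xor t w = xor t' w) = (t = t')"
      by (metis xor.assoc xor.comm_neutral xor_self_eq)
  next
    fix t assume "t \<in> {t\<in>{..<(2::nat)^r}. xor t w \<in> S}" then show "xor t w \<in> S" by simp
  next
    fix s assume s: "s \<in> S"
    have "xor (xor s w) w = s" by (simp add: xor.assoc)
    moreover have "xor s w < 2^r" using s assms by (intro xor_lt_nat) auto
    ultimately show "\<exists>t\<in>{t\<in>{..<(2::nat)^r}. xor t w \<in> S}. s = xor t w" using s
      by (intro bexI[of _ "xor s w"]) auto
  qed
  then show ?thesis by (rule bij_betw_same_card)
qed



lemma indep_entry: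
  assumes A: "A \<subseteq> tables c \<sigma> r" "finite A" "A \<noteq> {}"
    and k: "k < c" and x: "x \<in> keys c \<sigma>"
    and cl: "\<forall>T\<in>A. \<forall>t<2^r. T((k, x!k):=t) \<in> A"
    and inv: "\<forall>T\<in>A. \<forall>t<2^r. (T((k, x!k):=t) \<in> F \<longleftrightarrow> T \<in> F)"
    and S: "S \<subseteq> {..<2^r}"
  shows "measure_pmf.prob (pmf_of_set A) ({T. tab_hash c T x \<in> S} \<inter> F)
         = real (card S) / 2^r * measure_pmf.prob (pmf_of_set A) F"
proof -
  define e where "e = (k, x!k)"
  have e: "e \<in> {..<c} \<times> {..<\<sigma>}" using k x unfolding e_def keys_def by (auto intro: nth_mem)
  let ?A0 = "(\<lambda>T. T(e:=0)) ` A"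
  have cle: "\<forall>T\<in>A. \<forall>t<2^r. T(e:=t) \<in> A" using cl unfolding e_def by simp
  have A0: "T0 \<in> A" "T0 e = 0" if "T0 \<in> ?A0" for T0
    using that cl unfolding e_def by auto
  have invA0: "T0(e:=t) \<in> F \<longleftrightarrow> T0 \<in> F" if T0: "T0 \<in> ?A0" and tt: "t < 2^r" for T0 t
  proof -
    obtain T1 where T1: "T1 \<in> A" "T0 = T1(e:=0)" using T0 by blast
    have "T0(e:=t) = T1(e:=t)" using T1 by simp
    then show ?thesis using inv T1 tt unfolding e_def by auto
  qed
  have fin0: "finite ?A0" using A by simp
  have c1: "card {T\<in>A. T \<in> {T. tab_hash c T x \<in> S} \<inter> F}
     = (\<Sum>T0\<in>?A0. card {t\<in>{..<(2::nat)^r}. T0(e:=t) \<in> {T. tab_hash c T x \<in> S} \<inter> F})"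
    by (rule count_fiber[OF A(1,2) e cle])
  also have "\<dots> = (\<Sum>T0\<in>?A0. if T0 \<in> F then card S else 0)"
  proof (rule sum.cong)
    fix T0 assume T0: "T0 \<in> ?A0"
    have hx: "tab_hash c (T0(e:=t)) x = xor t (tab_hash c T0 x)" for t
      using tab_hash_upd[OF k, of T0 x t] A0[OF T0] unfolding e_def by simp
    have "{t\<in>{..<(2::nat)^r}. T0(e:=t) \<in> {T. tab_hash c T x \<in> S} \<inter> F}
        = (if T0 \<in> F then {t\<in>{..<(2::nat)^r}. xor t (tab_hash c T0 x) \<in> S} else {})"
      using invA0[OF T0] hx by auto
    moreover have "tab_hash c T0 x < 2^r" using tab_hash_lt A0[OF T0] A x by auto
    ultimately show "card {t\<in>{..<(2::nat)^r}. T0(e:=t) \<in> {T. tab_hash c T x \<in> S} \<inter> F}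
        = (if T0 \<in> F then card S else 0)"
      using card_xor_shift[OF S] by simp
  qed simp
  finally have c1': "card (A \<inter> ({T. tab_hash c T x \<in> S} \<inter> F)) = (\<Sum>T0\<in>?A0. if T0 \<in> F then card S else 0)"
    by (simp add: Int_def)
  have "card {T\<in>A. T \<in> F} = (\<Sum>T0\<in>?A0. card {t\<in>{..<(2::nat)^r}. T0(e:=t) \<in> F})"
    by (rule count_fiber[OF A(1,2) e cle])
  also have "\<dots> = (\<Sum>T0\<in>?A0. if T0 \<in> F then 2^r else 0)"
  proof (rule sum.cong)
    fix T0 assume T0: "T0 \<in> ?A0"
    have "{t\<in>{..<(2::nat)^r}. T0(e:=t) \<in> F} = (if T0 \<in> F then {..<2^r} else {})"
      using invA0[OF T0] by auto
    then show "card {t\<in>{..<(2::nat)^r}. T0(e:=t) \<in> F} = (if T0 \<in> F then 2^r else 0)" by simp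
  qed simp
  finally have c2: "card (A \<inter> F) = (\<Sum>T0\<in>?A0. if T0 \<in> F then 2^r else 0)"
    by (simp add: Int_def)
  have s1: "(\<Sum>T0\<in>?A0. if T0 \<in> F then card S else 0) = card S * card (?A0 \<inter> F)"
    using fin0 by (simp add: sum.If_cases)
  have s2: "(\<Sum>T0\<in>?A0. if T0 \<in> F then (2::nat)^r else 0) = 2^r * card (?A0 \<inter> F)"
    using fin0 by (simp add: sum.If_cases)
  show ?thesis
    using A c1' c2 s1 s2 by (simp add: measure_pmf_of_set)
qed

lemma telescope:
  fixes M :: "'a pmf" and E :: "nat \<Rightarrow> 'a set" and \<rho> :: real and b :: "nat \<Rightarrow> real"
  assumes "0 \<le> \<rho>" "\<rho> \<le> 1" "\<forall>i<n. measure_pmf.prob M (E i) = \<rho>"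
    "\<forall>i<n. \<bar>measure_pmf.prob M (E i \<inter> (\<Union>j<i. E j)) - \<rho> * measure_pmf.prob M (\<Union>j<i. E j)\<bar> \<le> b i"
  shows "\<bar>measure_pmf.prob M (\<Union>j<n. E j) - (1 - (1-\<rho>)^n)\<bar> \<le> (\<Sum>i<n. b i)"
  using assms(3,4)
proof (induction n)
  case 0 then show ?case by simp
next
  case (Suc n)
  let ?P = "measure_pmf.prob M"
  let ?U = "\<Union>j<n. E j"
  have U: "(\<Union>j<Suc n. E j) = ?U \<union> E n" by (auto simp: lessThan_Suc)
  have "?P (?U \<union> E n) = ?P ?U + ?P (E n - ?U)"
    by (rule measure_pmf.finite_measure_Union') auto
  also have "?P (E n - ?U) = ?P (E n) - ?P (E n \<inter> ?U)"
    by (rule measure_pmf.finite_measure_Diff') auto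
  finally have eq: "?P (\<Union>j<Suc n. E j) = ?P ?U + \<rho> - ?P (E n \<inter> ?U)"
    using U Suc.prems by simp
  define err where "err = ?P (E n \<inter> ?U) - \<rho> * ?P ?U"
  have errb: "\<bar>err\<bar> \<le> b n" using Suc.prems unfolding err_def by auto
  have IH: "\<bar>?P ?U - (1 - (1-\<rho>)^n)\<bar> \<le> (\<Sum>i<n. b i)" using Suc by auto
  have "?P (\<Union>j<Suc n. E j) - (1 - (1-\<rho>)^Suc n) = (1-\<rho>) * (?P ?U - (1 - (1-\<rho>)^n)) - err"
    unfolding eq err_def by (simp add: algebra_simps)
  also have "\<bar>\<dots>\<bar> \<le> (1-\<rho>) * \<bar>?P ?U - (1 - (1-\<rho>)^n)\<bar> + \<bar>err\<bar>"
  proof -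
    have "\<bar>(1-\<rho>) * (?P ?U - (1 - (1-\<rho>)^n)) - err\<bar> \<le> \<bar>(1-\<rho>) * (?P ?U - (1 - (1-\<rho>)^n))\<bar> + \<bar>err\<bar>"
      by (rule abs_triangle_ineq4)
    moreover have "\<bar>(1-\<rho>) * (?P ?U - (1 - (1-\<rho>)^n))\<bar> = (1-\<rho>) * \<bar>?P ?U - (1 - (1-\<rho>)^n)\<bar>"
      using assms(2) by (simp add: abs_mult)
    ultimately show ?thesis by simp
  qed
  also have "\<dots> \<le> 1 * \<bar>?P ?U - (1 - (1-\<rho>)^n)\<bar> + \<bar>err\<bar>"
    using assms(1,2) by (intro add_right_mono mult_right_mono) auto
  finally show ?case using IH errb by simp
qed

lemma err_bound:
  fixes M :: "'a pmf" and Ei F :: "'a set" and E :: "nat \<Rightarrow> 'a set"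
  assumes "finite J" "0 \<le> \<rho>"
    "\<forall>j\<in>J. measure_pmf.prob M (Ei \<inter> E j) = \<rho>^2"
    "\<forall>j\<in>J. measure_pmf.prob M (E j) = \<rho>"
    "measure_pmf.prob M (Ei \<inter> F) = \<rho> * measure_pmf.prob M F"
  shows "\<bar>measure_pmf.prob M (Ei \<inter> (F \<union> (\<Union>j\<in>J. E j))) - \<rho> * measure_pmf.prob M (F \<union> (\<Union>j\<in>J. E j))\<bar>
     \<le> real (card J) * \<rho>^2"
proof -
  let ?P = "measure_pmf.prob M"
  let ?G = "\<Union>j\<in>J. E j"
  have a: "?P (Ei \<inter> (F \<union> ?G)) = ?P (Ei \<inter> F) + ?P (Ei \<inter> (?G - F))"
  proof -
    have "Ei \<inter> (F \<union> ?G) = (Ei \<inter> F) \<union> (Ei \<inter> (?G - F))" by blast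
    then show ?thesis by (simp add: measure_pmf.finite_measure_Union Int_Diff disjoint_iff)
  qed
  have b: "?P (F \<union> ?G) = ?P F + ?P (?G - F)"
    by (rule measure_pmf.finite_measure_Union') auto
  have u1: "?P (Ei \<inter> (?G - F)) \<le> real (card J) * \<rho>^2"
  proof -
    have "?P (Ei \<inter> (?G - F)) \<le> ?P (\<Union>j\<in>J. Ei \<inter> E j)"
      by (rule measure_pmf.finite_measure_mono) auto
    also have "\<dots> \<le> (\<Sum>j\<in>J. ?P (Ei \<inter> E j))"
      using assms(1) by (intro measure_pmf.finite_measure_subadditive_finite) auto
    also have "\<dots> = real (card J) * \<rho>^2" using assms(3) by simp
    finally show ?thesis .
  qed
  have u2: "?P (?G - F) \<le> real (card J) * \<rho>"
  proof -
    have "?P (?G - F) \<le> ?P ?G"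
      by (rule measure_pmf.finite_measure_mono) auto
    also have "\<dots> \<le> (\<Sum>j\<in>J. ?P (E j))"
      using assms(1) by (intro measure_pmf.finite_measure_subadditive_finite) auto
    also have "\<dots> = real (card J) * \<rho>" using assms(4) by simp
    finally show ?thesis .
  qed
  have u2': "\<rho> * ?P (?G - F) \<le> real (card J) * \<rho>^2"
    using mult_left_mono[OF u2 assms(2)] by (simp add: power2_eq_square algebra_simps)
  have "?P (Ei \<inter> (F \<union> ?G)) - \<rho> * ?P (F \<union> ?G) = ?P (Ei \<inter> (?G - F)) - \<rho> * ?P (?G - F)"
    using a b assms(5) by (simp add: algebra_simps)
  moreover have "0 \<le> ?P (Ei \<inter> (?G - F))" "0 \<le> \<rho> * ?P (?G - F)" using assms(2) by auto
  ultimately show ?thesis using u1 u2' by linarith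
qed



lemma convex_power_nonneg: "convex_on {0::real..} (\<lambda>x. x^n)"
proof (intro f''_ge0_imp_convex)
  show "((\<lambda>x. x ^ n) has_real_derivative of_nat n * x^(n-1)) (at x)" for x
    by (rule derivative_eq_intros | simp)+
  show "((\<lambda>x. of_nat n * x^(n-1)) has_real_derivative of_nat n * of_nat (n-1) * x^(n-2)) (at x)" for x
    by (rule derivative_eq_intros | simp add: eval_nat_numeral)+
  show "\<And>x. x \<in> {0::real..} \<Longrightarrow> 0 \<le> real n * real (n - 1) * x ^ (n - 2)"
    by auto
qed auto

lemma power_mean:
  fixes s :: "'a \<Rightarrow> real"
  assumes "finite I" "I \<noteq> {}" "\<forall>i\<in>I. 0 \<le> s i" "n \<ge> 1"
  shows "(\<Sum>i\<in>I. s i)^n \<le> real (card I)^(n-1) * (\<Sum>i\<in>I. s i ^ n)"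
proof -
  define m where "m = real (card I)"
  have m: "m > 0" using assms unfolding m_def by (simp add: card_gt_0_iff)
  have "(\<lambda>x. x^n) (\<Sum>i\<in>I. (1/m) *\<^sub>R s i) \<le> (\<Sum>i\<in>I. (1/m) * (\<lambda>x. x^n) (s i))"
    using assms m by (intro convex_on_sum[OF _ _ convex_power_nonneg]) (auto simp: m_def)
  then have "((\<Sum>i\<in>I. s i) / m)^n \<le> (\<Sum>i\<in>I. s i ^ n) / m"
    by (simp add: sum_divide_distrib[symmetric] sum_distrib_left[symmetric])
  then have "(\<Sum>i\<in>I. s i)^n / m^n \<le> (\<Sum>i\<in>I. s i ^ n) / m"
    by (simp add: power_divide)
  then have "(\<Sum>i\<in>I. s i)^n \<le> (\<Sum>i\<in>I. s i ^ n) / m * m^n"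
    using m by (simp add: divide_le_eq)
  also have "\<dots> = m^(n-1) * (\<Sum>i\<in>I. s i ^ n)"
    using m assms(4) by (simp add: power_eq_if field_simps)
  finally show ?thesis unfolding m_def .
qed

lemma pow_powr_inv:
  assumes "(a::real) \<ge> 0" "n \<ge> 1"
  shows "(a^n) powr (1/real n) = a"
proof (cases "a = 0")
  case True then show ?thesis using assms by simp
next
  case False
  then have "a > 0" using assms by simp
  then have "(a^n) powr (1/real n) = (a powr real n) powr (1/real n)" by (simp add: powr_realpow)
  also have "\<dots> = a" using assms \<open>a > 0\<close> by (simp add: powr_powr)
  finally show ?thesis .
qed

lemma sum_min_bound:
  fixes s :: "'a \<Rightarrow> real" and M :: "'a \<Rightarrow> nat \<Rightarrow> real"
  assumes "finite X" "c \<ge> 1" "\<forall>x\<in>X. 0 \<le> s x" "\<forall>x\<in>X. \<forall>k<c. s x \<le> M x k"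
    "(\<Sum>x\<in>X. \<Prod>k<c. M x k) \<le> B"
  shows "(\<Sum>x\<in>X. s x) \<le> (real (card X)^(c-1) * B) powr (1/real c)"
proof (cases "X = {}")
  case True then show ?thesis by simp
next
  case False
  have "(\<Sum>x\<in>X. s x)^c \<le> real (card X)^(c-1) * (\<Sum>x\<in>X. s x ^ c)"
    using power_mean[OF assms(1) False assms(3,2)] .
  also have "(\<Sum>x\<in>X. s x ^ c) \<le> (\<Sum>x\<in>X. \<Prod>k<c. M x k)"
  proof (rule sum_mono)
    fix x assume x: "x \<in> X"
    have "s x ^ c = (\<Prod>k<c. s x)" by simp
    also have "\<dots> \<le> (\<Prod>k<c. M x k)" using assms(3,4) x by (intro prod_mono) auto
    finally show "s x ^ c \<le> (\<Prod>k<c. M x k)" .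
  qed
  finally have "(\<Sum>x\<in>X. s x)^c \<le> real (card X)^(c-1) * B"
    using assms(5) by (meson mult_left_mono order_trans zero_le_power of_nat_0_le_iff)
  moreover have "0 \<le> (\<Sum>x\<in>X. s x)" using assms(3) by (intro sum_nonneg) auto
  ultimately have "((\<Sum>x\<in>X. s x)^c) powr (1/real c) \<le> (real (card X)^(c-1) * B) powr (1/real c)"
    by (intro powr_mono2) auto
  then show ?thesis using pow_powr_inv[of "\<Sum>x\<in>X. s x" c] assms(2,3) by (simp add: sum_nonneg)
qed

lemma count_tuples:
  fixes X :: "nat list set" and P :: "nat list \<Rightarrow> nat \<Rightarrow> bool"
  assumes X: "finite X" "X \<subseteq> keys c \<sigma>"
    and Pdet: "\<And>x x' k. x \<in> X \<Longrightarrow> x' \<in> X \<Longrightarrow> k < c \<Longrightarrow> P x k \<Longrightarrow> P x' k \<Longrightarrow> x!k = x'!k"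
  shows "(\<Sum>x\<in>X. \<Prod>k<c. card (if P x k then X else {y\<in>X. y!k = x!k}))
         \<le> card X ^ c * card ((\<lambda>x. {k\<in>{..<c}. P x k}) ` X)"
proof -
  let ?B = "\<lambda>x k. if P x k then X else {y\<in>X. y!k = x!k}"
  let ?Sg = "Sigma X (\<lambda>x. PiE {..<c} (?B x))"
  let ?f = "\<lambda>(x, ys). (ys, {k\<in>{..<c}. P x k})"
  have "(\<Sum>x\<in>X. \<Prod>k<c. card (?B x k)) = (\<Sum>x\<in>X. card (PiE {..<c} (?B x)))"
    by (simp add: card_PiE)
  also have "\<dots> = card ?Sg" using X by (intro card_SigmaI[symmetric]) (auto intro: finite_PiE)
  also have "\<dots> \<le> card (PiE {..<c} (\<lambda>_. X) \<times> (\<lambda>x. {k\<in>{..<c}. P x k}) ` X)"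
  proof (rule card_inj_on_le)
    show "inj_on ?f ?Sg"
    proof (rule inj_onI)
      fix p1 p2 assume p1: "p1 \<in> ?Sg" and p2: "p2 \<in> ?Sg" and eq: "?f p1 = ?f p2"
      obtain x ys where [simp]: "p1 = (x, ys)" by (cases p1)
      obtain x' ys' where [simp]: "p2 = (x', ys')" by (cases p2)
      have x: "x \<in> X" "x' \<in> X" and ys: "ys \<in> PiE {..<c} (?B x)" "ys' \<in> PiE {..<c} (?B x')"
        using p1 p2 by auto
      have eqs: "ys = ys'" and eqK: "{k\<in>{..<c}. P x k} = {k\<in>{..<c}. P x' k}" using eq by auto
      have len: "length x = c" "length x' = c" using x X unfolding keys_def by auto
      have "x = x'"
      proof (rule nth_equalityI)
        show "length x = length x'" using len by simp
      next
        fix k assume "k < length x"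
        then have k: "k < c" using len by simp
        show "x!k = x'!k"
        proof (cases "P x k")
          case True
          then have "P x' k" using eqK k by blast
          then show ?thesis using Pdet x k True by blast
        next
          case False
          then have "\<not> P x' k" using eqK k by blast
          moreover have "ys' k \<in> ?B x' k" using PiE_mem[OF ys(2)] k by blast
          ultimately have "ys' k \<in> {y\<in>X. y!k = x'!k}" by simp
          moreover have "ys k \<in> ?B x k" using PiE_mem[OF ys(1)] k by blast
          then have "ys k \<in> {y\<in>X. y!k = x!k}" using False by simp
          ultimately show ?thesis using eqs by simp
        qed
      qed
      then show "p1 = p2" using eqs by simp
    qed
  next
    show "?f ` ?Sg \<subseteq> PiE {..<c} (\<lambda>_. X) \<times> (\<lambda>x. {k\<in>{..<c}. P x k}) ` X"
    proof
      fix p assume "p \<in> ?f ` ?Sg"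
      then obtain x ys where x: "x \<in> X" and ys: "ys \<in> PiE {..<c} (?B x)" and p: "p = ?f (x, ys)"
        by auto
      have "ys \<in> PiE {..<c} (\<lambda>_. X)"
        using ys by (auto simp: PiE_iff split: if_splits)
      then show "p \<in> PiE {..<c} (\<lambda>_. X) \<times> (\<lambda>x. {k\<in>{..<c}. P x k}) ` X" using p x by auto
    qed
  next
    show "finite (PiE {..<c} (\<lambda>_. X) \<times> (\<lambda>x. {k\<in>{..<c}. P x k}) ` X)"
      using X by (auto intro: finite_PiE)
  qed
  also have "\<dots> = card X ^ c * card ((\<lambda>x. {k\<in>{..<c}. P x k}) ` X)"
    by (simp add: card_cartesian_product card_PiE)
  finally show ?thesis .
qed



lemma finite_keys: "finite (keys c \<sigma>)"
proof -
  have "keys c \<sigma> = {xs. set xs \<subseteq> {..<\<sigma>} \<and> length xs = c}" unfolding keys_def by auto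
  then show ?thesis using finite_lists_length_eq[of "{..<\<sigma>}" c] by simp
qed

lemma hash_inv:
  assumes "k < c" "y!k \<noteq> a"
  shows "tab_hash c (T((k, a) := t)) y = tab_hash c T y"
  using assms by (intro tab_hash_cong) auto

lemma core:
  fixes A :: "(nat \<times> nat \<Rightarrow> nat) set" and good :: "nat list \<Rightarrow> nat \<Rightarrow> bool"
  assumes A: "A \<subseteq> tables c \<sigma> r" "finite A" "A \<noteq> {}"
    and X: "X \<subseteq> keys c \<sigma>" and S: "S \<subseteq> {..<2^r}"
    and cl: "\<forall>x\<in>X. \<forall>k<c. good x k \<longrightarrow> (\<forall>T\<in>A. \<forall>t<2^r. T((k, x!k):=t) \<in> A)"
    and exg: "\<forall>x\<in>X. \<exists>k<c. good x k"
    and pair: "\<forall>x\<in>X. \<forall>y\<in>X. x \<noteq> y \<longrightarrow> (\<exists>k<c. x!k \<noteq> y!k \<and> (good x k \<or> good y k))"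
  shows "\<bar>measure_pmf.prob (pmf_of_set A) {T. tab_hash c T ` X \<inter> S \<noteq> {}}
          - (1 - (1 - real (card S) / 2^r) ^ card X)\<bar>
        \<le> (real (card S) / 2^r)^2 *
           (\<Sum>x\<in>X. Min ((\<lambda>k. real (card {y\<in>X. y!k = x!k})) ` {k. k<c \<and> good x k}))"
proof -
  let ?P = "measure_pmf.prob (pmf_of_set A)"
  define \<rho> where "\<rho> = real (card S) / 2^r"
  have finX: "finite X" using X finite_keys finite_subset by blast
  have cS: "card S \<le> 2^r" using card_mono[OF _ S] by simp
  have \<rho>0: "0 \<le> \<rho>" and \<rho>1: "\<rho> \<le> 1" unfolding \<rho>_def using cS by (auto simp: divide_le_eq_1)
  define g where "g x = Min ((\<lambda>k. real (card {y\<in>X. y!k = x!k})) ` {k. k<c \<and> good x k})" for x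
  obtain xs where xs0: "distinct xs" "set xs = X" using finite_distinct_list[OF finX] by blast
  define m where "m = card X"
  have xs: "distinct xs" "set xs = X" "length xs = m"
    unfolding m_def using xs0 distinct_card[OF xs0(1)] by auto
  have xsX: "xs!i \<in> X" if "i < m" for i using xs that nth_mem by metis
  define E where "E i = {T. tab_hash c T (xs!i) \<in> S}" for i
  have F1: "?P ({T. tab_hash c T x \<in> S} \<inter> F) = \<rho> * ?P F"
    if x: "x \<in> X" and k: "k < c" "good x k"
      and inv: "\<forall>T\<in>A. \<forall>t<2^r. (T((k, x!k):=t) \<in> F \<longleftrightarrow> T \<in> F)" for x k F
    unfolding \<rho>_def
    using indep_entry[OF A k(1) _ _ inv S] x X cl k by blast
  have F2: "?P {T. tab_hash c T x \<in> S} = \<rho>" if x: "x \<in> X" for x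
  proof -
    obtain k where k: "k < c" "good x k" using exg x by blast
    have "?P ({T. tab_hash c T x \<in> S} \<inter> UNIV) = \<rho> * ?P UNIV"
      by (rule F1[OF x k]) auto
    then show ?thesis by simp
  qed
  have F3: "?P ({T. tab_hash c T x \<in> S} \<inter> {T. tab_hash c T y \<in> S}) = \<rho>^2"
    if x: "x \<in> X" and y: "y \<in> X" and xy: "x \<noteq> y" for x y
  proof -
    obtain k where k: "k < c" "x!k \<noteq> y!k" "good x k \<or> good y k" using pair x y xy by blast
    show ?thesis
    proof (cases "good x k")
      case True
      have "?P ({T. tab_hash c T x \<in> S} \<inter> {T. tab_hash c T y \<in> S}) = \<rho> * ?P {T. tab_hash c T y \<in> S}"
        using k by (intro F1[OF x k(1) True]) (auto simp: hash_inv)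
      then show ?thesis using F2[OF y] by (simp add: power2_eq_square)
    next
      case False
      then have gy: "good y k" using k by simp
      have "?P ({T. tab_hash c T y \<in> S} \<inter> {T. tab_hash c T x \<in> S}) = \<rho> * ?P {T. tab_hash c T x \<in> S}"
        using k by (intro F1[OF y k(1) gy]) (auto simp: hash_inv)
      then show ?thesis using F2[OF x] by (simp add: power2_eq_square Int_commute)
    qed
  qed
  have step: "\<bar>?P (E i \<inter> (\<Union>j<i. E j)) - \<rho> * ?P (\<Union>j<i. E j)\<bar> \<le> \<rho>^2 * g (xs!i)"
    if i: "i < m" for i
  proof -
    define x where "x = xs!i"
    have x: "x \<in> X" using xsX[OF i] unfolding x_def .
    let ?K = "{k. k<c \<and> good x k}"
    let ?f = "\<lambda>k. real (card {y\<in>X. y!k = x!k})"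
    have "?f ` ?K \<noteq> {}" "finite (?f ` ?K)" using exg x by auto
    then have "Min (?f ` ?K) \<in> ?f ` ?K" by (rule Min_in[rotated])
    then obtain k where k: "k < c" "good x k" and gk: "g x = ?f k"
      unfolding g_def by auto
    define J where "J = {j\<in>{..<i}. xs!j!k = x!k}"
    define I1 where "I1 = {j\<in>{..<i}. xs!j!k \<noteq> x!k}"
    define F where "F = (\<Union>j\<in>I1. E j)"
    have U: "(\<Union>j<i. E j) = F \<union> (\<Union>j\<in>J. E j)" unfolding F_def I1_def J_def by auto
    have finJ: "finite J" unfolding J_def by auto
    have Fi: "?P (E i \<inter> F) = \<rho> * ?P F"
      unfolding E_def x_def[symmetric]
    proof (rule F1[OF x k])
      show "\<forall>T\<in>A. \<forall>t<2 ^ r. (T((k, x ! k) := t) \<in> F) = (T \<in> F)"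
        unfolding F_def E_def I1_def using k(1) by (auto simp: hash_inv)
    qed
    have pj: "\<forall>j\<in>J. ?P (E i \<inter> E j) = \<rho>^2"
    proof
      fix j assume j: "j \<in> J"
      then have "j < m" "j \<noteq> i" using i unfolding J_def by auto
      then have "xs!j \<noteq> xs!i" using xs i by (simp add: nth_eq_iff_index_eq)
      then show "?P (E i \<inter> E j) = \<rho>^2" unfolding E_def
        using F3 xsX i \<open>j < m\<close> by auto
    qed
    have ej: "\<forall>j\<in>J. ?P (E j) = \<rho>"
      using F2 xsX i unfolding E_def J_def by auto
    have "\<bar>?P (E i \<inter> (\<Union>j<i. E j)) - \<rho> * ?P (\<Union>j<i. E j)\<bar> \<le> real (card J) * \<rho>^2"
      unfolding U by (rule err_bound[OF finJ \<rho>0 pj ej Fi])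
    also have "real (card J) \<le> g x"
    proof -
      have inj: "inj_on ((!) xs) J" using xs i unfolding J_def
        by (intro inj_onI) (auto simp: nth_eq_iff_index_eq)
      have "(!) xs ` J \<subseteq> {y\<in>X. y!k = x!k}" using xsX i unfolding J_def by auto
      then have "card ((!) xs ` J) \<le> card {y\<in>X. y!k = x!k}" using finX by (intro card_mono) auto
      then show ?thesis using card_image[OF inj] gk by simp
    qed
    then have "real (card J) * \<rho>^2 \<le> g x * \<rho>^2" by (intro mult_right_mono) auto
    finally show ?thesis unfolding x_def by (simp add: mult.commute)
  qed
  have tel: "\<bar>?P (\<Union>j<m. E j) - (1 - (1-\<rho>)^m)\<bar> \<le> (\<Sum>i<m. \<rho>^2 * g (xs!i))"
    using telescope[OF \<rho>0 \<rho>1, of m "pmf_of_set A" E] F2 xsX step unfolding E_def by auto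
  have ev: "{T. tab_hash c T ` X \<inter> S \<noteq> {}} = (\<Union>j<m. E j)"
  proof -
    have "X = (!) xs ` {..<m}" using xs by (auto simp: in_set_conv_nth)
    then show ?thesis unfolding E_def by auto
  qed
  have sm: "(\<Sum>i<m. \<rho>^2 * g (xs!i)) = \<rho>^2 * (\<Sum>x\<in>X. g x)"
  proof -
    have inj: "inj_on ((!) xs) {..<m}" using xs by (intro inj_onI) (auto simp: nth_eq_iff_index_eq)
    have "X = (!) xs ` {..<m}" using xs by (auto simp: in_set_conv_nth)
    then have "(\<Sum>x\<in>X. g x) = (\<Sum>i<m. g (xs!i))" using sum.reindex[OF inj, of g] by simp
    then show ?thesis by (simp add: sum_distrib_left)
  qed
  have "\<bar>?P {T. tab_hash c T ` X \<inter> S \<noteq> {}} - (1 - (1-\<rho>)^m)\<bar> \<le> \<rho>^2 * (\<Sum>x\<in>X. g x)"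
    using tel unfolding ev sm .
  then show ?thesis unfolding \<rho>_def m_def g_def .
qed



lemma powr_helper:
  assumes "(m::real) \<ge> 0" "c \<ge> 1"
  shows "(m^(c-1) * m^c) powr (1/real c) = m powr (2 - 1/real c)"
proof (cases "m = 0")
  case True then show ?thesis using assms by simp
next
  case False
  then have m: "m > 0" using assms by simp
  have "m^(c-1) * m^c = m powr (real (c-1) + real c)"
    using m by (simp add: powr_realpow powr_add)
  also have "real (c-1) + real c = 2 * real c - 1" using assms by (simp add: of_nat_diff)
  finally have "(m^(c-1) * m^c) powr (1/real c) = m powr ((2 * real c - 1) * (1/real c))"
    using m by (simp add: powr_powr)
  also have "(2 * real c - 1) * (1/real c) = 2 - 1/real c" using assms by (simp add: field_simps)
  finally show ?thesis .
qed

lemma keys_neq_pos: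
  assumes "x \<in> keys c \<sigma>" "y \<in> keys c \<sigma>" "x \<noteq> y"
  shows "\<exists>k<c. x!k \<noteq> y!k"
proof (rule ccontr)
  assume "\<not> ?thesis"
  moreover have "length x = c" "length y = c" using assms unfolding keys_def by auto
  ultimately have "x = y" by (intro nth_equalityI) auto
  then show False using assms by simp
qed

lemma cond_pmf_of_set:
  assumes "finite B" "B \<inter> C \<noteq> {}"
  shows "cond_pmf (pmf_of_set B) C = pmf_of_set (B \<inter> C)"
proof (rule pmf_eqI)
  fix x
  have Bne: "B \<noteq> {}" using assms by auto
  have sp: "set_pmf (pmf_of_set B) \<inter> C \<noteq> {}" using assms Bne by simp
  have cpos: "card (B \<inter> C) > 0" using assms by (simp add: card_gt_0_iff)
  have cB: "card B > 0" using assms Bne by (simp add: card_gt_0_iff)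
  show "pmf (cond_pmf (pmf_of_set B) C) x = pmf (pmf_of_set (B \<inter> C)) x"
    using assms Bne cpos cB
    by (simp add: pmf_cond[OF sp] measure_pmf_of_set indicator_def)
qed

theorem theorem5:
  fixes c \<sigma> r :: nat and X :: "nat list set" and S :: "nat set"
  assumes c_pos: "c \<ge> 1" and sigma_pos: "\<sigma> \<ge> 1"
    and X_keys: "X \<subseteq> keys c \<sigma>"
    and S_sub: "S \<subseteq> {..<2^r}"
  shows
   "\<bar>measure_pmf.prob (tab_dist c \<sigma> r) {T. tab_hash c T ` X \<inter> S \<noteq> {}}
       - (1 - (1 - real (card S) / 2^r) ^ card X)\<bar>
      \<le> real (card X) powr (2 - 1 / real c) * (real (card S) / 2^r)^2
    \<and> (\<forall>q (Sf :: nat \<Rightarrow> nat set). q \<in> keys c \<sigma> \<longrightarrow> q \<notin> X \<longrightarrow>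
         (\<forall>z<2^r. Sf z \<subseteq> {..<2^r}) \<longrightarrow>
         (\<forall>z<2^r.
            \<bar>measure_pmf.prob (cond_pmf (tab_dist c \<sigma> r) {T. tab_hash c T q = z})
                 {T. tab_hash c T ` X \<inter> Sf z \<noteq> {}}
              - (1 - (1 - real (card (Sf z)) / 2^r) ^ card X)\<bar>
            \<le> 2 * real (card X) powr (2 - 1 / real c) * (real (card (Sf z)) / 2^r)^2))"
proof
  have finX: "finite X" using X_keys finite_keys finite_subset by blast
  let ?m = "card X"
  let ?Tb = "tables c \<sigma> r"
  let ?C = "\<lambda>x k. real (card {y\<in>X. y!k = x!k})"
  have core1: "\<bar>measure_pmf.prob (pmf_of_set ?Tb) {T. tab_hash c T ` X \<inter> S \<noteq> {}}
          - (1 - (1 - real (card S) / 2^r) ^ card X)\<bar>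
        \<le> (real (card S) / 2^r)^2 * (\<Sum>x\<in>X. Min ((\<lambda>k. ?C x k) ` {k. k<c \<and> True}))"
  proof (rule core[OF subset_refl finite_tables tables_ne X_keys S_sub])
    show "\<forall>x\<in>X. \<forall>k<c. True \<longrightarrow> (\<forall>T\<in>?Tb. \<forall>t<2^r. T((k, x!k):=t) \<in> ?Tb)"
      using X_keys unfolding keys_def by (auto intro!: tables_upd intro: nth_mem)
    show "\<forall>x\<in>X. \<exists>k<c. True" using c_pos by (auto intro!: exI[of _ 0])
    show "\<forall>x\<in>X. \<forall>y\<in>X. x \<noteq> y \<longrightarrow> (\<exists>k<c. x!k \<noteq> y!k \<and> (True \<or> True))"
      using keys_neq_pos X_keys by blast
  qed
  have comb1: "(\<Sum>x\<in>X. Min ((\<lambda>k. ?C x k) ` {k. k<c \<and> True})) \<le> real ?m powr (2 - 1/real c)"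
  proof -
    have ne: "finite ((\<lambda>k. ?C x k) ` {k. k<c \<and> True})" "(\<lambda>k. ?C x k) ` {k. k<c \<and> True} \<noteq> {}" for x
      using c_pos by (auto simp: image_is_empty intro!: exI[of _ 0])
    have cnt: "(\<Sum>x\<in>X. \<Prod>k<c. card (if False then X else {y\<in>X. y!k = x!k}))
         \<le> ?m ^ c * card ((\<lambda>x. {k\<in>{..<c}. False}) ` X)"
      by (rule count_tuples[OF finX X_keys]) auto
    have "card ((\<lambda>x. {k\<in>{..<c}. False}) ` X) \<le> card {{}::nat set}"
      by (intro card_mono) auto
    then have "card ((\<lambda>x. {k\<in>{..<c}. False}) ` X) \<le> 1" by simp
    then have "?m ^ c * card ((\<lambda>x. {k\<in>{..<c}. False}) ` X) \<le> ?m ^ c * 1"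
      by (rule mult_le_mono2)
    moreover have "(\<Sum>x\<in>X. \<Prod>k<c. card (if False then X else {y\<in>X. y!k = x!k}))
       = (\<Sum>x\<in>X. \<Prod>k<c. card {y\<in>X. y!k = x!k})" by simp
    ultimately have cnt': "(\<Sum>x\<in>X. \<Prod>k<c. card {y\<in>X. y!k = x!k}) \<le> ?m ^ c"
      using cnt by linarith
    have "(\<Sum>x\<in>X. \<Prod>k<c. ?C x k) \<le> real (?m ^ c)"
      using cnt' by (simp flip: of_nat_sum of_nat_prod)
    then have "(\<Sum>x\<in>X. Min ((\<lambda>k. ?C x k) ` {k. k<c \<and> True})) \<le> (real ?m^(c-1) * real ?m^c) powr (1/real c)"
      using ne by (intro sum_min_bound[OF finX c_pos]) (auto intro: Min_le)
    also have "\<dots> = real ?m powr (2 - 1/real c)" using c_pos by (intro powr_helper) auto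
    finally show ?thesis .
  qed
  show "\<bar>measure_pmf.prob (tab_dist c \<sigma> r) {T. tab_hash c T ` X \<inter> S \<noteq> {}}
       - (1 - (1 - real (card S) / 2^r) ^ card X)\<bar>
      \<le> real (card X) powr (2 - 1 / real c) * (real (card S) / 2^r)^2"
  proof -
    have "(real (card S) / 2^r)^2 * (\<Sum>x\<in>X. Min ((\<lambda>k. ?C x k) ` {k. k<c \<and> True}))
        \<le> (real (card S) / 2^r)^2 * real ?m powr (2 - 1/real c)"
      using comb1 by (intro mult_left_mono) auto
    then show ?thesis using core1 unfolding tab_dist_def by (simp add: mult.commute)
  qed
next
  show "\<forall>q (Sf :: nat \<Rightarrow> nat set). q \<in> keys c \<sigma> \<longrightarrow> q \<notin> X \<longrightarrow>
         (\<forall>z<2^r. Sf z \<subseteq> {..<2^r}) \<longrightarrow>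
         (\<forall>z<2^r.
            \<bar>measure_pmf.prob (cond_pmf (tab_dist c \<sigma> r) {T. tab_hash c T q = z})
                 {T. tab_hash c T ` X \<inter> Sf z \<noteq> {}}
              - (1 - (1 - real (card (Sf z)) / 2^r) ^ card X)\<bar>
            \<le> 2 * real (card X) powr (2 - 1 / real c) * (real (card (Sf z)) / 2^r)^2)"
  proof (intro allI impI)
    fix q and Sf :: "nat \<Rightarrow> nat set" and z :: nat
    assume q: "q \<in> keys c \<sigma>" and qX: "q \<notin> X" and Sf: "\<forall>z<2^r. Sf z \<subseteq> {..<2^r}" and z: "z < 2^r"
    have finX: "finite X" using X_keys finite_keys finite_subset by blast
    let ?m = "card X"
    let ?Tb = "tables c \<sigma> r"
    let ?A = "?Tb \<inter> {T. tab_hash c T q = z}"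
    have S: "Sf z \<subseteq> {..<2^r}" using Sf z by auto
    have q0: "q!0 < \<sigma>"
    proof -
      have "q!0 \<in> set q" using q c_pos unfolding keys_def by (auto intro: nth_mem)
      then show ?thesis using q unfolding keys_def by auto
    qed
    have Ane: "?A \<noteq> {}"
    proof
      assume e: "?A = {}"
      have "measure_pmf.prob (pmf_of_set ?Tb) ({T. tab_hash c T q \<in> {z}} \<inter> UNIV)
          = real (card {z}) / 2^r * measure_pmf.prob (pmf_of_set ?Tb) UNIV"
        using c_pos q z q0
        by (intro indep_entry[OF subset_refl finite_tables tables_ne, of 0]) (auto simp: keys_def intro!: tables_upd intro: nth_mem)
      moreover have "measure_pmf.prob (pmf_of_set ?Tb) ({T. tab_hash c T q \<in> {z}} \<inter> UNIV) = 0"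
        using e by (simp add: measure_pmf_of_set[OF tables_ne finite_tables])
      ultimately show False by simp
    qed
    have finA: "finite ?A" using finite_tables by auto
    have cond: "cond_pmf (tab_dist c \<sigma> r) {T. tab_hash c T q = z} = pmf_of_set ?A"
      unfolding tab_dist_def using Ane by (intro cond_pmf_of_set finite_tables)
    let ?C = "\<lambda>x k. real (card {y\<in>X. y!k = x!k})"
    have core2: "\<bar>measure_pmf.prob (pmf_of_set ?A) {T. tab_hash c T ` X \<inter> Sf z \<noteq> {}}
          - (1 - (1 - real (card (Sf z)) / 2^r) ^ card X)\<bar>
        \<le> (real (card (Sf z)) / 2^r)^2 * (\<Sum>x\<in>X. Min ((\<lambda>k. ?C x k) ` {k. k<c \<and> x!k \<noteq> q!k}))"
    proof (rule core[OF _ finA Ane X_keys S])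
      show "?A \<subseteq> ?Tb" by auto
      show "\<forall>x\<in>X. \<forall>k<c. x!k \<noteq> q!k \<longrightarrow> (\<forall>T\<in>?A. \<forall>t<2^r. T((k, x!k):=t) \<in> ?A)"
        using X_keys unfolding keys_def by (auto intro!: tables_upd intro: nth_mem simp: hash_inv)
      show "\<forall>x\<in>X. \<exists>k<c. x!k \<noteq> q!k" using keys_neq_pos X_keys q qX by blast
      show "\<forall>x\<in>X. \<forall>y\<in>X. x \<noteq> y \<longrightarrow> (\<exists>k<c. x!k \<noteq> y!k \<and> (x!k \<noteq> q!k \<or> y!k \<noteq> q!k))"
        using keys_neq_pos X_keys by fastforce
    qed
    have comb2: "(\<Sum>x\<in>X. Min ((\<lambda>k. ?C x k) ` {k. k<c \<and> x!k \<noteq> q!k})) \<le> 2 * real ?m powr (2 - 1/real c)"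
    proof -
      have ne: "finite ((\<lambda>k. ?C x k) ` {k. k<c \<and> x!k \<noteq> q!k})" "(\<lambda>k. ?C x k) ` {k. k<c \<and> x!k \<noteq> q!k} \<noteq> {}"
        if xX: "x \<in> X" for x
      proof -
        have "x \<noteq> q" using xX qX by auto
        then obtain k where "k < c" "x!k \<noteq> q!k" using keys_neq_pos[of x c \<sigma> q] X_keys q xX by blast
        then show "finite ((\<lambda>k. ?C x k) ` {k. k<c \<and> x!k \<noteq> q!k})" "(\<lambda>k. ?C x k) ` {k. k<c \<and> x!k \<noteq> q!k} \<noteq> {}"
          by auto
      qed
      let ?M = "\<lambda>x k. real (card (if x!k = q!k then X else {y\<in>X. y!k = x!k}))"
      have cnt: "(\<Sum>x\<in>X. \<Prod>k<c. card (if x!k = q!k then X else {y\<in>X. y!k = x!k}))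
         \<le> ?m ^ c * card ((\<lambda>x. {k\<in>{..<c}. x!k = q!k}) ` X)"
        by (rule count_tuples[OF finX X_keys]) auto
      have "card ((\<lambda>x. {k\<in>{..<c}. x!k = q!k}) ` X) \<le> card (Pow {..<c})"
        by (intro card_mono) auto
      then have "card ((\<lambda>x. {k\<in>{..<c}. x!k = q!k}) ` X) \<le> 2^c" by (simp add: card_Pow)
      then have cnt': "(\<Sum>x\<in>X. \<Prod>k<c. card (if x!k = q!k then X else {y\<in>X. y!k = x!k})) \<le> ?m ^ c * 2^c"
        using cnt by (meson le_trans mult_le_mono2)
      have B: "(\<Sum>x\<in>X. \<Prod>k<c. ?M x k) \<le> real ?m ^ c * 2^c"
      proof -
        have "(\<Sum>x\<in>X. \<Prod>k<c. ?M x k) = real (\<Sum>x\<in>X. \<Prod>k<c. card (if x!k = q!k then X else {y\<in>X. y!k = x!k}))"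
          by (simp add: of_nat_sum of_nat_prod)
        also have "\<dots> \<le> real (?m ^ c * 2^c)" using cnt' by (simp only: of_nat_le_iff)
        finally show ?thesis by simp
      qed
      have sle: "Min ((\<lambda>k. ?C x k) ` {k. k<c \<and> x!k \<noteq> q!k}) \<le> ?M x k" if x: "x \<in> X" and k: "k < c" for x k
      proof (cases "x!k = q!k")
        case False
        then show ?thesis using ne[OF x] k by (auto intro: Min_le)
      next
        case True
        obtain k' where k': "k' \<in> {k. k<c \<and> x!k \<noteq> q!k}" using ne(2)[OF x] by auto
        have "Min ((\<lambda>k. ?C x k) ` {k. k<c \<and> x!k \<noteq> q!k}) \<le> ?C x k'"
          using ne[OF x] k' by (auto intro: Min_le)
        also have "\<dots> \<le> real ?m" using finX by (simp add: card_mono)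
        finally show ?thesis using True by simp
      qed
      have "(\<Sum>x\<in>X. Min ((\<lambda>k. ?C x k) ` {k. k<c \<and> x!k \<noteq> q!k})) \<le> (real ?m^(c-1) * (real ?m ^ c * 2^c)) powr (1/real c)"
        using ne sle B by (intro sum_min_bound[OF finX c_pos]) (auto simp: Min_ge_iff)
      also have "\<dots> = (real ?m^(c-1) * real ?m ^ c) powr (1/real c) * (2^c) powr (1/real c)"
        by (simp add: powr_mult mult.assoc)
      also have "\<dots> = real ?m powr (2 - 1/real c) * 2"
      proof -
        have "(real ?m^(c-1) * real ?m ^ c) powr (1/real c) = real ?m powr (2 - 1/real c)"
          using c_pos by (intro powr_helper) auto
        moreover have "((2::real)^c) powr (1/real c) = 2" using c_pos by (intro pow_powr_inv) auto
        ultimately show ?thesis by simp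
      qed
      finally show ?thesis by simp
    qed
    have "(real (card (Sf z)) / 2^r)^2 * (\<Sum>x\<in>X. Min ((\<lambda>k. ?C x k) ` {k. k<c \<and> x!k \<noteq> q!k}))
        \<le> (real (card (Sf z)) / 2^r)^2 * (2 * real ?m powr (2 - 1/real c))"
      using comb2 by (intro mult_left_mono) auto
    then show "\<bar>measure_pmf.prob (cond_pmf (tab_dist c \<sigma> r) {T. tab_hash c T q = z})
                 {T. tab_hash c T ` X \<inter> Sf z \<noteq> {}}
              - (1 - (1 - real (card (Sf z)) / 2^r) ^ card X)\<bar>
            \<le> 2 * real (card X) powr (2 - 1 / real c) * (real (card (Sf z)) / 2^r)^2"
      using core2 unfolding cond by (simp add: mult.commute mult.left_commute)
  qed
qed

end
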